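(* Let $S$ be a semigroup generated by a finite set $A$, and let $\eta$ be a congruence on $S$. Then the natural map $\phi:(S,d_A)\to(S/\eta,d_{A/\eta})$, $s\mapsto s/\eta$, is a quasi-isometry if and only if there is a finite bound on the $d_A$-diameters of the $\eta$-classes of $S$.
   Context: For a semigroup $T$ generated by a finite set $B$, $d_B(x,y)=\inf\{|w|:w\in B^*,\ xw=y\}$ ($B^*$ the free monoid on $B$, $\inf\emptyset=\infty$). Here $A/\eta=\{a/\eta:a\in A\}$, a finite generating set of $S/\eta$. The $d_A$-diameter of a set $C\subseteq S$ is $\sup_{x,y\in C}d_A(x,y)$. A map $f:(X,d)\to(X',d')$ is a quasi-isometry if there are $1\le\lambda<\infty$, $0<\epsilon<\infty$, $0\le\mu<\infty$ with $\frac1\lambda d(x,y)-\epsilon\le d'(f(x),f(y))\le\lambda d(x,y)+\epsilon$ for all $x,y$, and for every $x'\in X'$ some $x$ with $\max(d'(x',f(x)),d'(f(x),x'))\le\mu$. *)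

theory Defs
  imports Main "HOL-Library.Extended_Real"
begin

text \<open>Right-multiplication distance in a semigroup given by an operation m,
  w.r.t. a generating set B: inf of lengths of words w over B with x w = y
  (x w computed as x * b1 * ... * bn; the empty word gives x). inf of the empty set is infinity.\<close>
definition word_dist :: "('a \<Rightarrow> 'a \<Rightarrow> 'a) \<Rightarrow> 'a set \<Rightarrow> 'a \<Rightarrow> 'a \<Rightarrow> enat" where
  "word_dist m B x y = (INF w \<in> {w. set w \<subseteq> B \<and> foldl m x w = y}. enat (length w))"

definition generates :: "('a \<Rightarrow> 'a \<Rightarrow> 'a) \<Rightarrow> 'a set \<Rightarrow> bool" where
  "generates m B \<longleftrightarrow> (\<forall>s. \<exists>a w. a \<in> B \<and> set w \<subseteq> B \<and> s = foldl m a w)"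

definition semigroup_congruence :: "('a::semigroup_mult \<times> 'a) set \<Rightarrow> bool" where
  "semigroup_congruence eta \<longleftrightarrow> equiv UNIV eta \<and>
     (\<forall>a b c. (a, b) \<in> eta \<longrightarrow> (c * a, c * b) \<in> eta \<and> (a * c, b * c) \<in> eta)"

definition quot_mult :: "('a::semigroup_mult \<times> 'a) set \<Rightarrow> 'a set \<Rightarrow> 'a set \<Rightarrow> 'a set" where
  "quot_mult eta X Y = eta `` {(SOME x. x \<in> X) * (SOME y. y \<in> Y)}"

definition diameter :: "('a \<Rightarrow> 'a \<Rightarrow> enat) \<Rightarrow> 'a set \<Rightarrow> enat" where
  "diameter d C = (SUP x \<in> C. SUP y \<in> C. d x y)"

text \<open>Quasi-isometry between (X,d) and (X',d') (asymmetric extended distances).\<close>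
definition quasi_isometry ::
  "'a set \<Rightarrow> ('a \<Rightarrow> 'a \<Rightarrow> enat) \<Rightarrow> 'b set \<Rightarrow> ('b \<Rightarrow> 'b \<Rightarrow> enat) \<Rightarrow> ('a \<Rightarrow> 'b) \<Rightarrow> bool" where
  "quasi_isometry X d X' d' f \<longleftrightarrow> f ` X \<subseteq> X' \<and>
    (\<exists>lam eps mu :: real. 1 \<le> lam \<and> 0 < eps \<and> 0 \<le> mu \<and>
      (\<forall>x\<in>X. \<forall>y\<in>X.
         ereal (1 / lam) * ereal_of_enat (d x y) - ereal eps \<le> ereal_of_enat (d' (f x) (f y)) \<and>
         ereal_of_enat (d' (f x) (f y)) \<le> ereal lam * ereal_of_enat (d x y) + ereal eps) \<and>
      (\<forall>x'\<in>X'. \<exists>x\<in>X. max (ereal_of_enat (d' x' (f x))) (ereal_of_enat (d' (f x) x')) \<le> ereal mu))"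

end

theory Submission
  imports Defs
begin

lemma wd_le:
  assumes "set w \<subseteq> B" "foldl m x w = y"
  shows "word_dist m B x y \<le> enat (length w)"
  unfolding word_dist_def using assms by (intro INF_lower2[of w]) auto

lemma wd_attained:
  assumes "word_dist m B x y \<noteq> \<infinity>"
  shows "\<exists>w. set w \<subseteq> B \<and> foldl m x w = y \<and> word_dist m B x y = enat (length w)"
proof -
  let ?W = "{w. set w \<subseteq> B \<and> foldl m x w = y}"
  have "?W \<noteq> {}" using assms unfolding word_dist_def by (metis INF_empty top_enat_def)
  then obtain w0 where "w0 \<in> ?W" by blast
  hence "Inf ((\<lambda>w. enat (length w)) ` ?W) \<in> (\<lambda>w. enat (length w)) ` ?W"
    by (intro wellorder_InfI) auto
  then show ?thesis unfolding word_dist_def by auto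
qed

lemma wd_self: "word_dist m B x x = 0"
proof -
  have "word_dist m B x x \<le> enat 0" using wd_le[of "[]" B m x x] by simp
  thus ?thesis by (simp add: zero_enat_def[symmetric])
qed

lemma wd_tri:
  assumes "set w \<subseteq> B"
  shows "word_dist m B x y \<le> enat (length w) + word_dist m B (foldl m x w) y"
proof (cases "word_dist m B (foldl m x w) y = \<infinity>")
  case True then show ?thesis by simp
next
  case False
  then obtain v where v: "set v \<subseteq> B" "foldl m (foldl m x w) v = y"
    "word_dist m B (foldl m x w) y = enat (length v)" using wd_attained[OF False] by blast
  have "set (w @ v) \<subseteq> B" using v(1) assms by simp
  moreover have "foldl m x (w @ v) = y" using v(2) by simp
  ultimately have "word_dist m B x y \<le> enat (length (w @ v))"
    by (rule wd_le)
  then show ?thesis using v by simp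
qed

context
  fixes eta :: "('a::semigroup_mult \<times> 'a) set"
  assumes cong: "semigroup_congruence eta"
begin

lemma eq: "equiv UNIV eta" using cong unfolding semigroup_congruence_def by blast

lemma qm: "quot_mult eta (eta``{x}) (eta``{y}) = eta``{x*y}"
proof -
  have ex: "\<And>z. \<exists>u. u \<in> eta``{z}" using eq by (meson equiv_class_self UNIV_I)
  define x' where "x' = (SOME u. u \<in> eta``{x})"
  define y' where "y' = (SOME u. u \<in> eta``{y})"
  have "x' \<in> eta``{x}" unfolding x'_def using ex by (rule someI_ex)
  hence 1: "(x,x') \<in> eta" by simp
  have "y' \<in> eta``{y}" unfolding y'_def using ex by (rule someI_ex)
  hence 2: "(y,y') \<in> eta" by simp
  have c: "\<And>a b c. (a,b)\<in>eta \<Longrightarrow> (c*a,c*b)\<in>eta \<and> (a*c,b*c)\<in>eta"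
    using cong unfolding semigroup_congruence_def by blast
  have tr: "trans eta" using eq by (simp add: equiv_def)
  have "(x*y, x'*y) \<in> eta" using c[OF 1] by blast
  moreover have "(x'*y, x'*y') \<in> eta" using c[OF 2] by blast
  ultimately have "(x*y, x'*y') \<in> eta" by (rule transD[OF tr])
  hence e: "eta``{x*y} = eta``{x'*y'}" by (rule equiv_class_eq[OF eq])
  have "quot_mult eta (eta``{x}) (eta``{y}) = eta``{x'*y'}"
    unfolding quot_mult_def x'_def y'_def by (rule refl)
  thus ?thesis using e by simp
qed

lemma qfold: "foldl (quot_mult eta) (eta``{x}) (map (\<lambda>a. eta``{a}) w) = eta``{foldl (*) x w}"
  by (induction w arbitrary: x) (simp_all add: qm)

lemma qd_le: "word_dist (quot_mult eta) ((\<lambda>a. eta``{a}) ` A) (eta``{x}) (eta``{y}) \<le> word_dist (*) A x y"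
  unfolding word_dist_def[of "(*)"]
proof (rule INF_greatest)
  fix w assume "w \<in> {w. set w \<subseteq> A \<and> foldl (*) x w = y}"
  then have w: "set w \<subseteq> A" "foldl (*) x w = y" by auto
  have "set (map (\<lambda>a. eta``{a}) w) \<subseteq> (\<lambda>a. eta``{a}) ` A" using w(1) by auto
  moreover have "foldl (quot_mult eta) (eta``{x}) (map (\<lambda>a. eta``{a}) w) = eta``{y}"
    using qfold[of x w] w(2) by simp
  ultimately have "word_dist (quot_mult eta) ((\<lambda>a. eta``{a}) ` A) (eta``{x}) (eta``{y}) \<le> enat (length (map (\<lambda>a. eta``{a}) w))"
    by (rule wd_le)
  then show "word_dist (quot_mult eta) ((\<lambda>a. eta``{a}) ` A) (eta``{x}) (eta``{y}) \<le> enat (length w)" by simp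
qed

lemma qd_fin:
  assumes "word_dist (quot_mult eta) ((\<lambda>a. eta``{a}) ` A) (eta``{x}) (eta``{y}) = enat n"
  shows "\<exists>w. set w \<subseteq> A \<and> length w = n \<and> (foldl (*) x w, y) \<in> eta"
proof -
  have ni: "word_dist (quot_mult eta) ((\<lambda>a. eta``{a}) ` A) (eta``{x}) (eta``{y}) \<noteq> \<infinity>"
    using assms by simp
  obtain w' where w': "set w' \<subseteq> (\<lambda>a. eta``{a}) ` A"
    "foldl (quot_mult eta) (eta``{x}) w' = eta``{y}" 
    "word_dist (quot_mult eta) ((\<lambda>a. eta``{a}) ` A) (eta``{x}) (eta``{y}) = enat (length w')"
    using wd_attained[OF ni] by blast
  define g where "g = (\<lambda>X. SOME a. a \<in> A \<and> X = eta``{a})"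
  define w where "w = map g w'"
  have P: "g X \<in> A \<and> X = eta``{g X}" if "X \<in> set w'" for X
  proof -
    have "\<exists>a. a \<in> A \<and> X = eta``{a}" using w'(1) that by blast
    then show ?thesis unfolding g_def by (rule someI_ex)
  qed
  have m: "map (\<lambda>a. eta``{a}) w = w'"
    unfolding w_def map_map
  proof (rule map_idI)
    fix X assume "X \<in> set w'"
    then have "X = eta``{g X}" using P by blast
    then show "((\<lambda>a. eta``{a}) \<circ> g) X = X" unfolding o_def by (rule sym)
  qed
  have s: "set w \<subseteq> A"
  proof
    fix a assume "a \<in> set w"
    then obtain X where X: "X \<in> set w'" "a = g X" unfolding w_def by auto
    show "a \<in> A" using P[OF X(1)] X(2) by blast
  qed
  have "eta``{foldl (*) x w} = eta``{y}" using trans[OF sym[OF qfold[of x w, unfolded m]] w'(2)] .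
  hence "(foldl (*) x w, y) \<in> eta" using eq_equiv_class_iff[OF eq, of "foldl (*) x w" y] by simp
  moreover have "length w = n" using w'(3) assms unfolding w_def by simp
  ultimately show ?thesis using s by blast
qed

end

theorem proposition8p3:
  fixes A :: "'a::semigroup_mult set" and eta :: "('a \<times> 'a) set"
  assumes "finite A" and "generates (*) A" and "semigroup_congruence eta"
  shows "quasi_isometry UNIV (word_dist (*) A)
           (UNIV // eta) (word_dist (quot_mult eta) ((\<lambda>a. eta `` {a}) ` A))
           (\<lambda>s. eta `` {s})
         \<longleftrightarrow> (\<exists>K::nat. \<forall>C \<in> UNIV // eta. diameter (word_dist (*) A) C \<le> enat K)"
proof
  let ?d = "word_dist (*) A"
  let ?d' = "word_dist (quot_mult eta) ((\<lambda>a. eta `` {a}) ` A)"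
  have eqv: "equiv UNIV eta" using eq[OF assms(3)] .
  {
    assume qi: "quasi_isometry UNIV ?d (UNIV // eta) ?d' (\<lambda>s. eta `` {s})"
    obtain lam eps mu :: real where le: "1 \<le> lam" "0 < eps" and
      B: "\<forall>x\<in>UNIV. \<forall>y\<in>UNIV.
         ereal (1 / lam) * ereal_of_enat (?d x y) - ereal eps \<le> ereal_of_enat (?d' (eta``{x}) (eta``{y})) \<and>
         ereal_of_enat (?d' (eta``{x}) (eta``{y})) \<le> ereal lam * ereal_of_enat (?d x y) + ereal eps"
      using qi[unfolded quasi_isometry_def] by (elim conjE exE) (rule that; assumption)
    have H: "ereal (1 / lam) * ereal_of_enat (?d x y) - ereal eps \<le> ereal_of_enat (?d' (eta``{x}) (eta``{y}))" for x y
      using conjunct1[OF B[rule_format, OF UNIV_I UNIV_I]] .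
    define K where "K = nat (ceiling (lam * eps))"
    have "\<forall>C \<in> UNIV // eta. diameter ?d C \<le> enat K"
    proof
      fix C assume C: "C \<in> UNIV // eta"
      show "diameter ?d C \<le> enat K" unfolding diameter_def
      proof (intro SUP_least)
        fix x y assume xy: "x \<in> C" "y \<in> C"
        obtain z where z: "C = eta``{z}" using C by (blast elim: quotientE)
        have zx: "(z,x) \<in> eta" and zy: "(z,y) \<in> eta" using xy z by auto
        have "eta``{z} = eta``{x}" using zx by (rule equiv_class_eq[OF eqv])
        moreover have "eta``{z} = eta``{y}" using zy by (rule equiv_class_eq[OF eqv])
        ultimately have "eta``{x} = eta``{y}" by simp
        hence e0: "?d' (eta``{x}) (eta``{y}) = 0" by (simp add: wd_self)
        have "ereal (1 / lam) * ereal_of_enat (?d x y) - ereal eps \<le> ereal_of_enat (?d' (eta``{x}) (eta``{y}))"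
          by (rule H)
        hence h: "ereal (1 / lam) * ereal_of_enat (?d x y) - ereal eps \<le> 0"
          unfolding e0 ereal_of_enat_zero .
        show "?d x y \<le> enat K"
        proof (cases "?d x y")
          case (enat n)
          then have "(1/lam) * real n - eps \<le> 0" using h by simp
          hence "real n \<le> lam * eps" using le by (simp add: field_simps)
          hence "n \<le> K" unfolding K_def by linarith
          then show ?thesis using enat by simp
        next
          case infinity
          have "ereal (1/lam) > 0" using le by simp
          then have "ereal (1 / lam) * ereal_of_enat (?d x y) = \<infinity>" using infinity by simp
          then show ?thesis using h by simp
        qed
      qed
    qed
    then show "\<exists>K::nat. \<forall>C \<in> UNIV // eta. diameter ?d C \<le> enat K" by blast
  }
  {
    assume "\<exists>K::nat. \<forall>C \<in> UNIV // eta. diameter ?d C \<le> enat K"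
    then obtain K :: nat where K: "\<forall>C \<in> UNIV // eta. diameter ?d C \<le> enat K" by blast
    have Kd: "?d u v \<le> enat K" if "(u, v) \<in> eta" for u v
    proof -
      have Q: "eta``{v} \<in> UNIV // eta" by (rule quotientI) simp
      have sy: "sym eta" using eqv by (simp add: equiv_def)
      have u: "u \<in> eta``{v}" using that symD[OF sy] by blast
      have v: "v \<in> eta``{v}" using eqv by (rule equiv_class_self) simp
      have "?d u v \<le> (SUP y \<in> eta``{v}. ?d u y)" using v by (rule SUP_upper)
      also have "\<dots> \<le> (SUP x \<in> eta``{v}. SUP y \<in> eta``{v}. ?d x y)" using u by (rule SUP_upper)
      also have "\<dots> \<le> enat K" using K Q unfolding diameter_def by blast
      finally show ?thesis .
    qed
    have up: "?d' (eta``{x}) (eta``{y}) \<le> ?d x y" for x y using qd_le[OF assms(3)] .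
    have low: "?d x y \<le> ?d' (eta``{x}) (eta``{y}) + enat K" for x y
    proof (cases "?d' (eta``{x}) (eta``{y})")
      case (enat n)
      then obtain w where w: "set w \<subseteq> A" "length w = n" "(foldl (*) x w, y) \<in> eta"
        using qd_fin[OF assms(3)] by blast
      have "?d x y \<le> enat (length w) + ?d (foldl (*) x w) y" using wd_tri w(1) .
      also have "\<dots> \<le> enat n + enat K" using add_left_mono[OF Kd[OF w(3)], of "enat (length w)"] w(2) by simp
      finally show ?thesis using enat by simp
    qed simp
    have bnd: "\<forall>x\<in>UNIV. \<forall>y\<in>UNIV. ereal (1 / 1) * ereal_of_enat (?d x y) - ereal (real K + 1) \<le> ereal_of_enat (?d' (eta``{x}) (eta``{y})) \<and>
         ereal_of_enat (?d' (eta``{x}) (eta``{y})) \<le> ereal 1 * ereal_of_enat (?d x y) + ereal (real K + 1)"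
    proof (intro ballI conjI)
      fix x y
      show "ereal (1 / 1) * ereal_of_enat (?d x y) - ereal (real K + 1) \<le> ereal_of_enat (?d' (eta``{x}) (eta``{y}))"
      proof (cases "?d' (eta``{x}) (eta``{y})")
        case (enat n')
        obtain n where n: "?d x y = enat n" "n \<le> n' + K" using low[of x y] enat
          by (cases "?d x y") auto
        show ?thesis using n enat by simp
      qed simp
      show "ereal_of_enat (?d' (eta``{x}) (eta``{y})) \<le> ereal 1 * ereal_of_enat (?d x y) + ereal (real K + 1)"
      proof (cases "?d x y")
        case (enat n)
        obtain n' where n: "?d' (eta``{x}) (eta``{y}) = enat n'" "n' \<le> n" using up[of x y] enat
          by (cases "?d' (eta``{x}) (eta``{y})") auto
        show ?thesis using n enat by simp
      qed simp
    qed
    have srj: "\<forall>x'\<in>UNIV // eta. \<exists>x\<in>UNIV. max (ereal_of_enat (?d' x' (eta``{x}))) (ereal_of_enat (?d' (eta``{x}) x'))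
         \<le> ereal 0"
    proof
      fix x' :: "'a set" assume "x' \<in> UNIV // eta"
      then obtain z where z: "x' = eta``{z}" by (auto elim!: quotientE)
      have "ereal_of_enat (?d' x' x') \<le> ereal 0"
        unfolding wd_self ereal_of_enat_zero zero_ereal_def by (rule order_refl)
      then show "\<exists>x\<in>UNIV. max (ereal_of_enat (?d' x' (eta``{x}))) (ereal_of_enat (?d' (eta``{x}) x')) \<le> ereal 0"
        using z by (intro bexI[of _ z]) auto
    qed
    have img: "(\<lambda>s. eta``{s}) ` UNIV \<subseteq> UNIV // eta" by (auto intro: quotientI)
    show "quasi_isometry UNIV ?d (UNIV // eta) ?d' (\<lambda>s. eta `` {s})"
      unfolding quasi_isometry_def
      apply (rule conjI)
      using img apply blast
      apply (rule exI[of _ "1::real"], rule exI[of _ "real K + 1"], rule exI[of _ "0::real"])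
      apply (intro conjI)
      apply simp
      apply simp
      apply simp
      apply (rule bnd)
      apply (rule srj)
      done
  }
qed

end
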